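(* Let $q=2^m>4$ and let $l$ be an integer with $0\leq l\leq 3$. Then there exists a linear $l$-intersection pair of two MDS codes over $\mathbb{F}_q$ both with parameters $[q+2,3,q]_q$.
   Context: An $[n,k,d]_q$ linear code is a $k$-dimensional subspace of $\mathbb{F}_q^n$ with minimum Hamming distance $d$; it is MDS if $d=n-k+1$. Two linear codes $C_1,C_2\subseteq\mathbb{F}_q^n$ form a linear $l$-intersection pair if $\dim(C_1\cap C_2)=l$. *)

theory Defs
  imports Complex_Main "HOL-Library.Function_Algebras"
begin

text \<open>Vectors of \<open>F_q^n\<close> are modelled as functions \<open>nat \<Rightarrow> 'a\<close> vanishing outside \<open>{..<n}\<close>.
  Scalar multiplication is pointwise.\<close>

definition vscale :: "'a::field \<Rightarrow> (nat \<Rightarrow> 'a) \<Rightarrow> (nat \<Rightarrow> 'a)" where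
  "vscale c v = (\<lambda>i. c * v i)"

lemma vector_space_vscale: "vector_space (vscale :: 'a::field \<Rightarrow> _)"
  by unfold_locales (auto simp: vscale_def fun_eq_iff algebra_simps)

definition ambient :: "nat \<Rightarrow> (nat \<Rightarrow> 'a::zero) set" where
  "ambient n = {v. \<forall>i\<ge>n. v i = 0}"

definition hamming_dist :: "nat \<Rightarrow> (nat \<Rightarrow> 'a) \<Rightarrow> (nat \<Rightarrow> 'a) \<Rightarrow> nat" where
  "hamming_dist n x y = card {i. i < n \<and> x i \<noteq> y i}"

definition linear_code :: "nat \<Rightarrow> (nat \<Rightarrow> 'a::field) set \<Rightarrow> bool" where
  "linear_code n C \<longleftrightarrow> C \<subseteq> ambient n \<and> module.subspace vscale C"

definition code_dim :: "(nat \<Rightarrow> 'a::field) set \<Rightarrow> nat" where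
  "code_dim C = vector_space.dim vscale C"

definition min_dist :: "nat \<Rightarrow> (nat \<Rightarrow> 'a) set \<Rightarrow> nat" where
  "min_dist n C = Min {hamming_dist n x y | x y. x \<in> C \<and> y \<in> C \<and> x \<noteq> y}"

definition is_nkd_code :: "nat \<Rightarrow> nat \<Rightarrow> nat \<Rightarrow> (nat \<Rightarrow> 'a::field) set \<Rightarrow> bool" where
  "is_nkd_code n k d C \<longleftrightarrow> linear_code n C \<and> code_dim C = k \<and> min_dist n C = d"

definition is_MDS :: "nat \<Rightarrow> (nat \<Rightarrow> 'a::field) set \<Rightarrow> bool" where
  "is_MDS n C \<longleftrightarrow> linear_code n C \<and> min_dist n C = n - code_dim C + 1"

definition l_intersection_pair :: "nat \<Rightarrow> (nat \<Rightarrow> 'a::field) set \<Rightarrow> (nat \<Rightarrow> 'a) set \<Rightarrow> bool" where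
  "l_intersection_pair l C1 C2 \<longleftrightarrow> code_dim (C1 \<inter> C2) = l"

end

theory Submission imports Defs begin

lemma even_neg_closed:
  fixes A :: "'a::field set"
  assumes "finite A" "0 \<notin> A" "\<And>x. x \<in> A \<Longrightarrow> - x \<in> A" "(2::'a) \<noteq> 0"
  shows "even (card A)"
  using assms
proof (induction "card A" arbitrary: A rule: less_induct)
  case less
  show ?case
  proof (cases "A = {}")
    case True then show ?thesis by simp
  next
    case False
    then obtain x where x: "x \<in> A" by blast
    have nx: "- x \<in> A" using less.prems(3) x .
    have xne: "x \<noteq> - x"
    proof
      assume xx: "x = - x"
      have "x + x = x + - x" using arg_cong[OF xx, of "\<lambda>z. x + z"] .
      also have "\<dots> = 0" by (rule add.right_inverse)
      finally have "2 * x = 0" by (simp only: mult_2)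
      then show False using less.prems(2,4) x by auto
    qed
    define A' where "A' = A - {x, - x}"
    have cA: "card A = card A' + 2"
    proof -
      have sub: "{x, - x} \<subseteq> A" using x nx by auto
      have c2: "card {x, - x} = 2" using xne by simp
      have "card A' = card A - 2" unfolding A'_def
        using card_Diff_subset[OF _ sub] c2 by simp
      moreover have "card A \<ge> 2" using card_mono[OF less.prems(1) sub] c2 by simp
      ultimately show ?thesis by simp
    qed
    have lt: "card A' < card A" using cA by simp
    have fA: "finite A'" using less.prems(1) unfolding A'_def by (rule finite_Diff)
    have zA: "0 \<notin> A'" using less.prems(2) unfolding A'_def by blast
    have clA: "- y \<in> A'" if y: "y \<in> A'" for y
    proof -
      have yA: "y \<in> A" "y \<noteq> x" "y \<noteq> - x" using y unfolding A'_def by auto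
      have "- y \<in> A" using less.prems(3)[OF yA(1)] .
      moreover have "- y \<noteq> x" using yA(3) by (metis minus_minus)
      moreover have "- y \<noteq> - x" using yA(2) by (metis minus_minus)
      ultimately show ?thesis unfolding A'_def by blast
    qed
    have "even (card A')"
      by (rule less.hyps[OF lt fA zA clA less.prems(4)])
    then show ?thesis using cA by simp
  qed
qed

lemma char2:
  assumes "even (card (UNIV :: 'a::{field,finite} set))"
  shows "(2::'a) = 0"
proof (rule ccontr)
  assume h: "(2::'a) \<noteq> 0"
  have e1: "even (card (UNIV - {0::'a}))"
  proof (rule even_neg_closed)
    show "finite (UNIV - {0::'a})" by simp
    show "(0::'a) \<notin> UNIV - {0}" by simp
    show "- x \<in> UNIV - {0}" if "x \<in> UNIV - {0::'a}" for x using that by simp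
    show "(2::'a) \<noteq> 0" by (rule h)
  qed
  have e2: "card (UNIV::'a set) = Suc (card (UNIV - {0::'a}))"
  proof -
    have "card (UNIV - {0::'a}) = card (UNIV::'a set) - 1" by (simp add: card_Diff_singleton)
    moreover have "card (UNIV::'a set) > 0" by (simp add: card_gt_0_iff)
    ultimately show ?thesis by simp
  qed
  have "even (Suc (card (UNIV - {0::'a})))" using assms unfolding e2 .
  then have "\<not> even (card (UNIV - {0::'a}))" by (simp only: even_Suc not_False_eq_True)
  then show False using e1 by blast
qed

global_interpretation V: vector_space "vscale :: 'a::field \<Rightarrow> (nat \<Rightarrow> 'a) \<Rightarrow> _"
  by (rule vector_space_vscale)

definition pval :: "'a::field \<Rightarrow> 'a \<Rightarrow> 'a \<Rightarrow> 'a \<Rightarrow> 'a" where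
  "pval a b c t = a + b * t + c * t^2"

lemma sum3: "a \<noteq> b \<Longrightarrow> a \<noteq> c \<Longrightarrow> b \<noteq> c \<Longrightarrow>
  (\<Sum>v\<in>{a,b,c}. f v) = f a + f b + (f c :: 'b::comm_monoid_add)"
  by (simp add: add.assoc)

lemma le1I:
  assumes "\<And>x y. P x \<Longrightarrow> P y \<Longrightarrow> x = y"
  shows "card {t::'a::finite. P t} \<le> 1"
  using assms card_le_Suc0_iff_eq[of "{t. P t}"] by auto

lemma quad_roots_sub:
  fixes a b c t0 :: "'a::field"
  assumes "c \<noteq> 0" "pval a b c t0 = 0"
  shows "{t. pval a b c t = 0} \<subseteq> {t0, - b / c - t0}"
proof
  fix t assume "t \<in> {t. pval a b c t = 0}"
  then have "pval a b c t - pval a b c t0 = 0" using assms by simp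
  then have "(t - t0) * (b + c * (t + t0)) = 0"
    by (simp add: pval_def algebra_simps power2_eq_square)
  then have "t = t0 \<or> b + c * (t + t0) = 0" by simp
  then show "t \<in> {t0, - b / c - t0}"
  proof
    assume "b + c * (t + t0) = 0"
    then have "t = - b / c - t0" using assms(1)
      by (simp add: field_simps) (metis add.commute add_diff_cancel eq_neg_iff_add_eq_0)
    then show ?thesis by simp
  qed simp
qed

lemma card_roots_le2:
  fixes a b c :: "'a::{field,finite}"
  assumes "\<not> (a = 0 \<and> b = 0 \<and> c = 0)"
  shows "card {t. pval a b c t = 0} \<le> 2"
proof (cases "c = 0")
  case False
  show ?thesis
  proof (cases "\<exists>t0. pval a b c t0 = 0")
    case True
    then obtain t0 where "pval a b c t0 = 0" by blast
    then have "card {t. pval a b c t = 0} \<le> card {t0, - b / c - t0}"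
      using quad_roots_sub[OF False] by (intro card_mono) auto
    also have "\<dots> \<le> 2" by (simp add: card_insert_le_m1)
    finally show ?thesis .
  qed simp
next
  case True
  have "card {t. pval a b c t = 0} \<le> 1"
  proof (rule le1I)
    fix x y assume h: "pval a b c x = 0" "pval a b c y = 0"
    then have "a + b * x = a + b * y" using True by (simp add: pval_def)
    then have "b * (x - y) = 0" by (simp add: right_diff_distrib)
    moreover have "b \<noteq> 0" using assms True h by (auto simp: pval_def)
    ultimately show "x = y" by simp
  qed
  then show ?thesis by simp
qed

lemma card_roots_le1_char2:
  fixes a c :: "'a::{field,finite}"
  assumes "(2::'a) = 0" "c \<noteq> 0"
  shows "card {t. pval a 0 c t = 0} \<le> 1"
proof (rule le1I)
  fix x y assume h: "pval a 0 c x = 0" "pval a 0 c y = 0"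
  have "a + c * x^2 = a + c * y^2" using h by (simp add: pval_def)
  then have "c * x^2 = c * y^2" by simp
  then have xy: "x^2 = y^2" using assms(2) by simp
  have z: "2 * x * y = 0" by (metis assms(1) mult_zero_left)
  have "(x - y)^2 = x^2 + y^2 - 2 * x * y" by (rule power2_diff)
  also have "\<dots> = x^2 + x^2" using xy z by simp
  also have "\<dots> = 2 * x^2" by (rule mult_2[symmetric])
  also have "\<dots> = 0" by (metis assms(1) mult_zero_left)
  finally show "x = y" by simp
qed

lemma card_roots_le1_lin:
  fixes a b :: "'a::{field,finite}"
  assumes "b \<noteq> 0"
  shows "card {t. pval a b 0 t = 0} \<le> 1"
proof (rule le1I)
  fix x y assume h: "pval a b 0 x = 0" "pval a b 0 y = 0"
  then have "a + b * x = a + b * y" by (simp add: pval_def)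
  then have "b * (x - y) = 0" by (simp add: right_diff_distrib)
  then show "x = y" using assms by simp
qed

locale hyp =
  fixes e :: "nat \<Rightarrow> 'a::{field,finite}" and q :: nat and i0 :: nat and lam :: 'a
  assumes bij: "bij_betw e {..<q} UNIV" and i0: "i0 < q" "e i0 = 0"
    and two: "(2::'a) = 0" and q4: "q \<ge> 4" and lam: "lam \<noteq> 0" "lam \<noteq> 1"
begin

definition base :: "nat \<Rightarrow> nat \<Rightarrow> 'a" where
  "base k i = (if k = 0 then (if i < q then 1 else 0)
     else if k = 1 then (if i < q then e i else if i = q then 1 else 0)
     else (if i < q then (e i)^2 else if i = Suc q then 1 else 0))"

definition G :: "(nat \<Rightarrow> 'a) \<Rightarrow> nat \<Rightarrow> nat \<Rightarrow> 'a" where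
  "G D k = (\<lambda>i. D i * base k i)"

definition enc :: "(nat \<Rightarrow> 'a) \<Rightarrow> 'a \<Rightarrow> 'a \<Rightarrow> 'a \<Rightarrow> nat \<Rightarrow> 'a" where
  "enc D a b c = (\<lambda>i. D i * (if i < q then pval a b c (e i) else if i = q then b
      else if i = Suc q then c else 0))"

definition cond :: "nat \<Rightarrow> 'a \<Rightarrow> 'a \<Rightarrow> 'a \<Rightarrow> bool" where
  "cond k a b c \<longleftrightarrow> (k \<le> 2 \<longrightarrow> c = 0) \<and> (k \<le> 1 \<longrightarrow> b = 0) \<and> (k = 0 \<longrightarrow> a = 0)"

definition codeC :: "(nat \<Rightarrow> 'a) \<Rightarrow> nat \<Rightarrow> (nat \<Rightarrow> 'a) set" where
  "codeC D k = {enc D a b c | a b c. cond k a b c}"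

lemma enc_lin: "enc D a b c = vscale a (G D 0) + vscale b (G D 1) + vscale c (G D 2)"
  by (auto simp: enc_def G_def base_def vscale_def pval_def fun_eq_iff algebra_simps)

lemma enc_add: "enc D a b c + enc D a' b' c' = enc D (a + a') (b + b') (c + c')"
  by (auto simp: enc_def pval_def fun_eq_iff algebra_simps)

lemma enc_diff: "enc D a b c i - enc D a' b' c' i = enc D (a - a') (b - b') (c - c') i"
  by (auto simp: enc_def pval_def fun_eq_iff algebra_simps)

lemma enc_scale: "vscale x (enc D a b c) = enc D (x * a) (x * b) (x * c)"
  by (auto simp: enc_def pval_def vscale_def fun_eq_iff algebra_simps)

lemma enc_zero: "enc D 0 0 0 = 0"
  by (auto simp: enc_def pval_def fun_eq_iff)

lemma cond_add: "cond k a b c \<Longrightarrow> cond k a' b' c' \<Longrightarrow> cond k (a + a') (b + b') (c + c')"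
  by (auto simp: cond_def)

lemma cond_scale: "cond k a b c \<Longrightarrow> cond k (x * a) (x * b) (x * c)"
  by (auto simp: cond_def)

lemma subspace_codeC: "V.subspace (codeC D k)"
proof (rule V.subspaceI)
  show "0 \<in> codeC D k" unfolding codeC_def
    by (rule CollectI, rule exI[of _ 0], rule exI[of _ 0], rule exI[of _ 0])
       (simp add: enc_zero cond_def)
next
  fix x y assume "x \<in> codeC D k" "y \<in> codeC D k"
  then show "x + y \<in> codeC D k" unfolding codeC_def
    using enc_add cond_add by blast
next
  fix c x assume "x \<in> codeC D k"
  then show "vscale c x \<in> codeC D k" unfolding codeC_def
    using enc_scale cond_scale by blast
qed

lemma G_enc: "G D 0 = enc D 1 0 0" "G D 1 = enc D 0 1 0" "G D 2 = enc D 0 0 1"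
  by (auto simp: enc_def G_def base_def pval_def fun_eq_iff)

lemma span_codeC:
  assumes "k \<le> 3"
  shows "V.span (G D ` {..<k}) = codeC D k"
proof (rule V.span_subspace)
  show "G D ` {..<k} \<subseteq> codeC D k"
  proof
    fix v assume "v \<in> G D ` {..<k}"
    then obtain j where j: "j < k" "v = G D j" by auto
    have "j = 0 \<or> j = 1 \<or> j = 2" using j assms by auto
    then have "(v = enc D 1 0 0 \<and> cond k 1 0 0) \<or> (v = enc D 0 1 0 \<and> cond k 0 1 0)
        \<or> (v = enc D 0 0 1 \<and> cond k 0 0 1)"
      using j G_enc by (auto simp: cond_def)
    then show "v \<in> codeC D k" unfolding codeC_def by blast
  qed
next
  show "codeC D k \<subseteq> V.span (G D ` {..<k})"
  proof
    fix v assume "v \<in> codeC D k"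
    then obtain a b c where v: "v = enc D a b c" "cond k a b c" unfolding codeC_def by auto
    have t: "vscale x (G D j) \<in> V.span (G D ` {..<k})" if "j < k \<or> x = 0" for x j
      using that
    proof
      assume "j < k" then show ?thesis by (intro V.span_scale V.span_base) auto
    next
      assume "x = 0" then have "vscale x (G D j) = 0" by (simp add: vscale_def fun_eq_iff)
      then show ?thesis by (metis V.span_zero)
    qed
    have "0 < k \<or> a = 0" "1 < k \<or> b = 0" "2 < k \<or> c = 0" using v(2) by (auto simp: cond_def)
    then show "v \<in> V.span (G D ` {..<k})" unfolding v(1) enc_lin
      by (intro V.span_add t) auto
  qed
next
  show "V.subspace (codeC D k)" by (rule subspace_codeC)
qed

lemma G_val:
  "G D 0 i0 = D i0" "G D 1 i0 = 0" "G D 2 i0 = 0"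
  "G D 0 q = 0" "G D 1 q = D q" "G D 2 q = 0"
  "G D 0 (Suc q) = 0" "G D 1 (Suc q) = 0" "G D 2 (Suc q) = D (Suc q)"
  using i0 by (auto simp: G_def base_def)

lemma G_val1: "G D (Suc 0) i0 = 0" "G D (Suc 0) q = D q" "G D (Suc 0) (Suc q) = 0"
  using i0 by (auto simp: G_def base_def)

lemma indep3:
  assumes D: "\<forall>i < Suc (Suc q). D i \<noteq> 0"
  shows "V.independent (G D ` {..<3})" "inj_on (G D) {..<3}"
proof -
  have D': "D i0 \<noteq> 0" "D q \<noteq> 0" "D (Suc q) \<noteq> 0" using D i0 by auto
  have d: "G D 0 \<noteq> G D 1" "G D 0 \<noteq> G D 2" "G D 1 \<noteq> G D 2"
  proof -
    have "G D 0 q \<noteq> G D 1 q" "G D 0 (Suc q) \<noteq> G D 2 (Suc q)" "G D 1 q \<noteq> G D 2 q"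
      using G_val D' by simp_all
    then show "G D 0 \<noteq> G D 1" "G D 0 \<noteq> G D 2" "G D 1 \<noteq> G D 2" by auto
  qed
  have S: "G D ` {..<3} = {G D 0, G D 1, G D 2}"
    by (auto simp: numeral_3_eq_3 numeral_2_eq_2 lessThan_Suc)
  show "inj_on (G D) {..<3}"
    using d by (auto simp: inj_on_def numeral_3_eq_3 numeral_2_eq_2 less_Suc_eq)
  show "V.independent (G D ` {..<3})"
    unfolding S
  proof
    assume dep: "V.dependent {G D 0, G D 1, G D 2}"
    have fin: "finite {G D 0, G D 1, G D 2}" by simp
    obtain u where h: "\<exists>v\<in>{G D 0, G D 1, G D 2}. u v \<noteq> 0"
      "(\<Sum>v\<in>{G D 0, G D 1, G D 2}. vscale (u v) v) = 0"
      using iffD1[OF V.dependent_finite[OF fin] dep] by (elim exE conjE)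
    have eq: "(\<Sum>v\<in>{G D 0, G D 1, G D 2}. vscale (u v) v) = vscale (u (G D 0)) (G D 0) + vscale (u (G D 1)) (G D 1)
        + vscale (u (G D 2)) (G D 2)" by (rule sum3[OF d])
    have s: "vscale (u (G D 0)) (G D 0) + vscale (u (G D 1)) (G D 1)
        + vscale (u (G D 2)) (G D 2) = 0"
      using h(2)[unfolded eq] .
    have "u (G D 0) * D i0 = 0" using fun_cong[OF s, of i0] by (simp add: vscale_def G_val G_val1)
    then have u0: "u (G D 0) = 0" using D' by simp
    have "u (G D 1) * D q = 0" using fun_cong[OF s, of q] by (simp add: vscale_def G_val G_val1)
    then have u1: "u (G D 1) = 0" using D' by simp
    have "u (G D 2) * D (Suc q) = 0" using fun_cong[OF s, of "Suc q"] by (simp add: vscale_def G_val G_val1)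
    then have u2: "u (G D 2) = 0" using D' by simp
    from h(1) obtain v where "v \<in> {G D 0, G D 1, G D 2}" "u v \<noteq> 0" by blast
    then show False using u0 u1 u2 by blast
  qed
qed

lemma dim_codeC:
  assumes D: "\<forall>i < Suc (Suc q). D i \<noteq> 0" and k: "k \<le> 3"
  shows "V.dim (codeC D k) = k"
proof -
  have sub: "G D ` {..<k} \<subseteq> G D ` {..<3}" using k by auto
  have "V.dim (V.span (G D ` {..<k})) = card (G D ` {..<k})"
    by (rule V.dim_span_eq_card_independent[OF V.independent_mono[OF indep3(1)[OF D] sub]])
  then have "V.dim (codeC D k) = card (G D ` {..<k})"
    using span_codeC[OF k, of D] by simp
  also have "\<dots> = k"
    using inj_on_subset[OF indep3(2)[OF D], of "{..<k}"] k by (simp add: card_image)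
  finally show ?thesis .
qed


lemma e_inj: "inj_on e {..<q}" using bij by (simp add: bij_betw_def)

lemma enc_val:
  "i < q \<Longrightarrow> enc D a b c i = D i * pval a b c (e i)"
  "enc D a b c q = D q * b"
  "enc D a b c (Suc q) = D (Suc q) * c"
  "i \<ge> Suc (Suc q) \<Longrightarrow> enc D a b c i = 0"
  by (auto simp: enc_def)

lemma enc_ambient: "enc D a b c \<in> ambient (q + 2)"
  unfolding ambient_def using enc_val(4) by auto

lemma card_Z1:
  "card {i. i < q \<and> pval a b c (e i) = 0} \<le> card {t. pval a b c t = 0}"
proof -
  let ?Z = "{i. i < q \<and> pval a b c (e i) = 0}"
  have "inj_on e ?Z" by (rule inj_on_subset[OF e_inj]) auto
  then have "card ?Z = card (e ` ?Z)" by (simp add: card_image)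
  also have "\<dots> \<le> card {t. pval a b c t = 0}" by (intro card_mono) auto
  finally show ?thesis .
qed

lemma zeros_le2:
  assumes D: "\<forall>i < q + 2. D i \<noteq> 0" and nz: "\<not> (a = 0 \<and> b = 0 \<and> c = 0)"
  shows "card {i. i < q + 2 \<and> enc D a b c i = 0} \<le> 2"
proof -
  let ?Z1 = "{i. i < q \<and> pval a b c (e i) = 0}"
  let ?Z2 = "{i. (i = q \<and> b = 0) \<or> (i = Suc q \<and> c = 0)}"
  have Zeq: "{i. i < q + 2 \<and> enc D a b c i = 0} = ?Z1 \<union> ?Z2"
  proof (rule set_eqI)
    fix i
    show "i \<in> {i. i < q + 2 \<and> enc D a b c i = 0} \<longleftrightarrow> i \<in> ?Z1 \<union> ?Z2"
    proof (cases "i < q")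
      case True
      then show ?thesis using D enc_val(1)[OF True] by auto
    next
      case False
      then have "i = q \<or> i = Suc q \<or> i \<ge> q + 2" by auto
      then show ?thesis using D enc_val(2,3) by auto
    qed
  qed
  have c1: "card ?Z1 \<le> card {t. pval a b c t = 0}" by (rule card_Z1)
  have "card (?Z1 \<union> ?Z2) \<le> 2"
  proof (cases "b = 0")
    case b0: True
    show ?thesis
    proof (cases "c = 0")
      case c0: True
      then have a0: "a \<noteq> 0" using nz b0 by simp
      have "{t. pval a b c t = 0} = {}" using a0 b0 c0 by (simp add: pval_def)
      then have "?Z1 = {}" using c1 by (simp add: card_eq_0_iff)
      moreover have "?Z2 = {q, Suc q}" using b0 c0 by auto
      ultimately show ?thesis by simp
    next
      case c0: False
      have "card {t. pval a b c t = 0} \<le> 1" using card_roots_le1_char2[OF two c0] b0 by simp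
      moreover have "?Z2 = {q}" using b0 c0 by auto
      ultimately show ?thesis using c1 card_Un_le[of ?Z1 ?Z2] by simp
    qed
  next
    case b0: False
    show ?thesis
    proof (cases "c = 0")
      case c0: True
      have "card {t. pval a b c t = 0} \<le> 1" using card_roots_le1_lin[OF b0] c0 by simp
      moreover have "?Z2 = {Suc q}" using b0 c0 by auto
      ultimately show ?thesis using c1 card_Un_le[of ?Z1 ?Z2] by simp
    next
      case c0: False
      have "card {t. pval a b c t = 0} \<le> 2" using card_roots_le2 nz by blast
      moreover have "?Z2 = {}" using b0 c0 by auto
      ultimately show ?thesis using c1 by simp
    qed
  qed
  then show ?thesis using Zeq by simp
qed

lemma weight_ge:
  assumes D: "\<forall>i < q + 2. D i \<noteq> 0" and nz: "\<not> (a = 0 \<and> b = 0 \<and> c = 0)"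
  shows "card {i. i < q + 2 \<and> enc D a b c i \<noteq> 0} \<ge> q"
proof -
  let ?Z = "{i. i < q + 2 \<and> enc D a b c i = 0}"
  have "{i. i < q + 2 \<and> enc D a b c i \<noteq> 0} = {..<q+2} - ?Z" by auto
  moreover have "card ({..<q+2} - ?Z) = (q + 2) - card ?Z"
    by (subst card_Diff_subset) auto
  moreover have "card ?Z \<le> 2" by (rule zeros_le2[OF D nz])
  ultimately show ?thesis by simp
qed

lemma ham_le: "hamming_dist n x y \<le> n"
proof -
  have "card {i. i < n \<and> x i \<noteq> y i} \<le> card {..<n}" by (intro card_mono) auto
  then show ?thesis by (simp add: hamming_dist_def)
qed

lemma min_dist_codeC:
  assumes D: "\<forall>i < q + 2. D i \<noteq> 0"
  shows "min_dist (q + 2) (codeC D 3) = q"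
proof -
  let ?C = "codeC D 3"
  let ?H = "{hamming_dist (q + 2) x y | x y. x \<in> ?C \<and> y \<in> ?C \<and> x \<noteq> y}"
  have fin: "finite ?H"
    by (rule finite_subset[of _ "{..q+2}"]) (auto simp: ham_le)
  have ge: "q \<le> h" if hH: "h \<in> ?H" for h
  proof -
    obtain x y where xy: "h = hamming_dist (q + 2) x y" "x \<in> ?C" "y \<in> ?C" "x \<noteq> y"
      using hH by blast
    obtain a b c a' b' c' where x: "x = enc D a b c" and y: "y = enc D a' b' c'"
      using xy(2,3) unfolding codeC_def by blast
    have nz: "\<not> (a - a' = 0 \<and> b - b' = 0 \<and> c - c' = 0)"
      using xy(4) x y by auto
    have "{i. i < q + 2 \<and> x i \<noteq> y i} = {i. i < q + 2 \<and> enc D (a - a') (b - b') (c - c') i \<noteq> 0}"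
      unfolding x y using enc_diff[of D a b c i a' b' c' for i]
      by (metis (no_types, lifting) right_minus_eq)
    then show ?thesis using weight_ge[OF D nz] xy(1) by (simp add: hamming_dist_def)
  qed
  have mem: "q \<in> ?H"
  proof -
    have cnd: "cond 3 a b c" for a b c :: 'a by (simp add: cond_def)
    have x: "enc D 1 0 0 \<in> ?C" "enc D 0 0 0 \<in> ?C" unfolding codeC_def using cnd by blast+
    have "{i. i < q + 2 \<and> enc D 1 0 0 i \<noteq> enc D 0 0 0 i} = {..<q}"
    proof (rule set_eqI)
      fix i
      show "i \<in> {i. i < q + 2 \<and> enc D 1 0 0 i \<noteq> enc D 0 0 0 i} \<longleftrightarrow> i \<in> {..<q}"
      proof (cases "i < q")
        case True
        then show ?thesis using D enc_val(1)[OF True] by (auto simp: pval_def)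
      next
        case False
        then have "i = q \<or> i = Suc q \<or> i \<ge> q + 2" by auto
        then show ?thesis using False enc_val(2,3,4) by auto
      qed
    qed
    then have hd: "hamming_dist (q + 2) (enc D 1 0 0) (enc D 0 0 0) = q"
      by (simp add: hamming_dist_def)
    have "enc D 1 0 0 i0 \<noteq> enc D 0 0 0 i0"
      using D i0 enc_val(1)[OF i0(1)] by (auto simp: pval_def)
    then have "enc D 1 0 0 \<noteq> enc D 0 0 0" by metis
    then show ?thesis using x hd by (metis (mono_tags, lifting) mem_Collect_eq)
  qed
  show ?thesis unfolding min_dist_def
    by (rule Min_eqI[OF fin ge mem])
qed


definition Dl :: "nat \<Rightarrow> nat \<Rightarrow> 'a" where
  "Dl l i = (if (i = Suc q \<and> l \<le> 2) \<or> (i = q \<and> l \<le> 1) \<or> (i = i0 \<and> l = 0) then lam else 1)"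

lemma Dl_nz: "Dl l i \<noteq> 0" using lam by (simp add: Dl_def)

lemma Dl_other: "i < q \<Longrightarrow> i \<noteq> i0 \<Longrightarrow> Dl l i = 1"
  by (simp add: Dl_def)

lemma three_pts:
  assumes "\<forall>i < q. i \<noteq> i0 \<longrightarrow> pval a b c (e i) = 0"
  shows "a = 0 \<and> b = 0 \<and> c = 0"
proof (rule ccontr)
  assume nz: "\<not> (a = 0 \<and> b = 0 \<and> c = 0)"
  let ?P = "{..<q} - {i0}"
  have "inj_on e ?P" by (rule inj_on_subset[OF e_inj]) auto
  then have "card (e ` ?P) = card ?P" by (simp add: card_image)
  also have "card ?P = q - 1" using i0(1) by simp
  finally have c: "card (e ` ?P) = q - 1" .
  have "card (e ` ?P) \<le> card {t. pval a b c t = 0}"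
    by (intro card_mono) (use assms in auto)
  also have "\<dots> \<le> 2" by (rule card_roots_le2[OF nz])
  finally show False using c q4 by simp
qed

lemma enc_one: "enc D a b c i = D i * enc (\<lambda>_. 1) a b c i"
  by (simp add: enc_def)

lemma inter_codeC:
  assumes l: "l \<le> 3"
  shows "codeC (\<lambda>_. 1) 3 \<inter> codeC (Dl l) 3 = codeC (\<lambda>_. 1) l"
proof (rule set_eqI)
  fix v
  have cnd: "cond 3 a b c" for a b c :: 'a by (simp add: cond_def)
  show "v \<in> codeC (\<lambda>_. 1) 3 \<inter> codeC (Dl l) 3 \<longleftrightarrow> v \<in> codeC (\<lambda>_. 1) l"
  proof
    assume "v \<in> codeC (\<lambda>_. 1) 3 \<inter> codeC (Dl l) 3"
    then obtain a b c a' b' c' where v1: "v = enc (\<lambda>_. 1) a b c" and v2: "v = enc (Dl l) a' b' c'"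
      unfolding codeC_def by blast
    have "\<forall>i < q. i \<noteq> i0 \<longrightarrow> pval (a - a') (b - b') (c - c') (e i) = 0"
    proof (intro allI impI)
      fix i assume i: "i < q" "i \<noteq> i0"
      have "enc (\<lambda>_. 1) a b c i = enc (Dl l) a' b' c' i" using v1 v2 by simp
      then have "pval a b c (e i) = pval a' b' c' (e i)"
        using enc_val(1)[OF i(1)] Dl_other[OF i] by simp
      then show "pval (a - a') (b - b') (c - c') (e i) = 0"
        by (simp add: pval_def algebra_simps)
    qed
    from three_pts[OF this] have eqs: "a' = a" "b' = b" "c' = c" by simp_all
    have v3: "v = enc (Dl l) a b c" using v2 unfolding eqs .
    have z: "enc (\<lambda>_. 1) a b c i = 0" if "Dl l i = lam" for i
    proof -
      have "enc (\<lambda>_. 1) a b c i = enc (Dl l) a b c i" using v1 v3 by simp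
      also have "\<dots> = lam * enc (\<lambda>_. 1) a b c i" using that enc_one by metis
      finally have "(1 - lam) * enc (\<lambda>_. 1) a b c i = 0" by (simp add: algebra_simps)
      then show ?thesis using lam(2) by simp
    qed
    have "cond l a b c"
      unfolding cond_def
    proof (intro conjI impI)
      assume "l \<le> 2"
      then have "Dl l (Suc q) = lam" by (simp add: Dl_def)
      then have "enc (\<lambda>_. 1) a b c (Suc q) = 0" by (rule z)
      then show "c = 0" using enc_val(3)[of "\<lambda>_. 1" a b c] by simp
    next
      assume "l \<le> 1"
      then have "Dl l q = lam" by (simp add: Dl_def)
      then have "enc (\<lambda>_. 1) a b c q = 0" by (rule z)
      then show "b = 0" using enc_val(2)[of "\<lambda>_. 1" a b c] by simp
    next
      assume "l = 0"
      then have "Dl l i0 = lam" by (simp add: Dl_def)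
      then have "enc (\<lambda>_. 1) a b c i0 = 0" by (rule z)
      then show "a = 0" using enc_val(1)[OF i0(1)] i0(2) by (simp add: pval_def)
    qed
    then show "v \<in> codeC (\<lambda>_. 1) l" unfolding codeC_def using v1 by blast
  next
    assume "v \<in> codeC (\<lambda>_. 1) l"
    then obtain a b c where v: "v = enc (\<lambda>_. 1) a b c" "cond l a b c"
      unfolding codeC_def by blast
    have "enc (\<lambda>_. 1) a b c i = enc (Dl l) a b c i" for i
    proof (cases "Dl l i = 1")
      case True then show ?thesis using enc_one[of "Dl l" a b c i] by simp
    next
      case False
      have "(i = Suc q \<and> l \<le> 2) \<or> (i = q \<and> l \<le> 1) \<or> (i = i0 \<and> l = 0)"
      proof (rule ccontr)
        assume "\<not> ((i = Suc q \<and> l \<le> 2) \<or> (i = q \<and> l \<le> 1) \<or> (i = i0 \<and> l = 0))"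
        then have "Dl l i = 1" unfolding Dl_def by (rule if_not_P)
        then show False using False by blast
      qed
      then have "enc (\<lambda>_. 1) a b c i = 0"
      proof (elim disjE conjE)
        assume "i = Suc q" "l \<le> 2"
        then show ?thesis using v(2) enc_val(3)[of "\<lambda>_. 1" a b c] by (simp add: cond_def)
      next
        assume "i = q" "l \<le> 1"
        then show ?thesis using v(2) enc_val(2)[of "\<lambda>_. 1" a b c] by (simp add: cond_def)
      next
        assume "i = i0" "l = 0"
        then show ?thesis using v(2) enc_val(1)[OF i0(1), of "\<lambda>_. 1" a b c] i0(2)
          by (simp add: cond_def pval_def)
      qed
      then show ?thesis using enc_one[of "Dl l" a b c i] by simp
    qed
    then have "v = enc (Dl l) a b c" using v(1) by auto
    then show "v \<in> codeC (\<lambda>_. 1) 3 \<inter> codeC (Dl l) 3"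
      unfolding codeC_def using v(1) cnd by blast
  qed
qed

lemma final:
  assumes l: "l \<le> 3"
  shows "\<exists>C1 C2 :: (nat \<Rightarrow> 'a) set.
           is_nkd_code (q + 2) 3 q C1 \<and> is_MDS (q + 2) C1 \<and>
           is_nkd_code (q + 2) 3 q C2 \<and> is_MDS (q + 2) C2 \<and>
           l_intersection_pair l C1 C2"
proof -
  have good: "is_nkd_code (q + 2) 3 q (codeC D 3) \<and> is_MDS (q + 2) (codeC D 3)"
    if D: "\<forall>i < q + 2. D i \<noteq> 0" for D
  proof -
    have D': "\<forall>i < Suc (Suc q). D i \<noteq> 0" using D by simp
    have lc: "linear_code (q + 2) (codeC D 3)"
      unfolding linear_code_def
      using subspace_codeC enc_ambient unfolding codeC_def by blast
    have dm: "code_dim (codeC D 3) = 3"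
      unfolding code_dim_def using dim_codeC[OF D'] by simp
    have md: "min_dist (q + 2) (codeC D 3) = q" by (rule min_dist_codeC[OF D])
    show ?thesis unfolding is_nkd_code_def is_MDS_def using lc dm md q4 by simp
  qed
  have g1: "is_nkd_code (q + 2) 3 q (codeC (\<lambda>_. 1) 3) \<and> is_MDS (q + 2) (codeC (\<lambda>_. 1) 3)"
    by (rule good) simp
  have g2: "is_nkd_code (q + 2) 3 q (codeC (Dl l) 3) \<and> is_MDS (q + 2) (codeC (Dl l) 3)"
    by (rule good) (simp add: Dl_nz)
  have "l_intersection_pair l (codeC (\<lambda>_. 1) 3) (codeC (Dl l) 3)"
    unfolding l_intersection_pair_def code_dim_def inter_codeC[OF l]
    using dim_codeC[OF _ l, of "\<lambda>_. 1"] by simp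
  then show ?thesis using g1 g2 by blast
qed

end

theorem theorem6:
  fixes m l :: nat
  assumes "card (UNIV :: 'a::{field,finite} set) = 2 ^ m"
    and "2 ^ m > (4::nat)"
    and "l \<le> 3"
  shows "\<exists>C1 C2 :: (nat \<Rightarrow> 'a) set.
           is_nkd_code (card (UNIV :: 'a set) + 2) 3 (card (UNIV :: 'a set)) C1 \<and>
           is_MDS (card (UNIV :: 'a set) + 2) C1 \<and>
           is_nkd_code (card (UNIV :: 'a set) + 2) 3 (card (UNIV :: 'a set)) C2 \<and>
           is_MDS (card (UNIV :: 'a set) + 2) C2 \<and>
           l_intersection_pair l C1 C2"
proof -
  let ?q = "card (UNIV :: 'a set)"
  obtain e :: "nat \<Rightarrow> 'a" where e: "bij_betw e {0..<?q} UNIV"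
    using ex_bij_betw_nat_finite[of "UNIV :: 'a set"] by auto
  have e': "bij_betw e {..<?q} UNIV" using e by (simp add: atLeast0LessThan)
  have "(0::'a) \<in> e ` {..<?q}" using e' by (simp add: bij_betw_def)
  then obtain i0 where i0: "i0 < ?q" "e i0 = 0" by auto
  have m0: "m \<noteq> 0" using assms(2) by (cases m) auto
  have ev: "even ?q" using assms(1) m0 by simp
  have two: "(2::'a) = 0" by (rule char2[OF ev])
  have q4: "?q \<ge> 4" using assms(1,2) by simp
  have "card ({0, 1} :: 'a set) \<le> 2" by (simp add: card_insert_le_m1)
  then have "card ({0, 1} :: 'a set) \<noteq> ?q" using q4 by linarith
  then have "({0, 1} :: 'a set) \<noteq> UNIV"
  proof (rule contrapos_nn)
    assume "({0, 1} :: 'a set) = UNIV"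
    then show "card ({0, 1} :: 'a set) = ?q" by (rule arg_cong)
  qed
  then obtain lam :: 'a where "lam \<notin> {0, 1}" by blast
  then have lam: "lam \<noteq> 0" "lam \<noteq> 1" by simp_all
  interpret H: hyp e ?q i0 lam
    by (intro hyp.intro e' i0 two q4 lam)
  show ?thesis by (rule H.final[OF assms(3)])
qed

end
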